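(* Let $n_u<n$ be positive integers, $n_b=n-n_u$, $\mathbf{A}\in\mathbb{R}^{n_u\times n_b}$, and $\mathbf{C}=[\mathbf{I}_{n_u}\;\; -\mathbf{A}]\in\mathbb{R}^{n_u\times n}$. Let $p\ge 2$ experts be given; for $j=1,\dots,p$ let $1\le n_j\le n$ and let $\mathbf{L}_j\in\{0,1\}^{n_j\times n}$ be a selection matrix (its rows are distinct rows of $\mathbf{I}_n$), and assume every $i\in\{1,\dots,n\}$ is selected by at least one $\mathbf{L}_j$. Let $m=\sum_{j=1}^p n_j$, $\mathbf{K}=[\mathbf{L}_1^\top\;\cdots\;\mathbf{L}_p^\top]^\top\in\{0,1\}^{m\times n}$, let $\widehat{\mathbf{y}}=[\widehat{\mathbf{y}}^{1\top}\cdots\widehat{\mathbf{y}}^{p\top}]^\top\in\mathbb{R}^m$ with $\widehat{\mathbf{y}}^j\in\mathbb{R}^{n_j}$, and let $\mathbf{W}\in\mathbb{R}^{m\times m}$ be symmetric positive definite. Then the solution of the linearly constrained quadratic program $$\widetilde{\mathbf{y}}^c=\arg\min_{\mathbf{y}\in\mathbb{R}^n}(\widehat{\mathbf{y}}-\mathbf{K}\mathbf{y})^\top\mathbf{W}^{-1}(\widehat{\mathbf{y}}-\mathbf{K}\mathbf{y})\quad\text{s.t. }\mathbf{C}\mathbf{y}=\mathbf{0}_{(n_u\times 1)}$$ is given by $\widetilde{\mathbf{y}}^c=\boldsymbol{\Psi}^\top\widehat{\mathbf{y}}=\mathbf{M}\boldsymbol{\Omega}^\top\widehat{\mathbf{y}}$,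 where $\mathbf{W}_c=(\mathbf{K}^\top\mathbf{W}^{-1}\mathbf{K})^{-1}$, $\boldsymbol{\Omega}=\mathbf{W}^{-1}\mathbf{K}\mathbf{W}_c$, $\mathbf{M}=\mathbf{I}_n-\mathbf{W}_c\mathbf{C}^\top(\mathbf{C}\mathbf{W}_c\mathbf{C}^\top)^{-1}\mathbf{C}$, and $\boldsymbol{\Psi}^\top=\mathbf{M}\boldsymbol{\Omega}^\top\in\mathbb{R}^{n\times m}$.
   Context: Setting: a linearly constrained multiple time series whose target forecast vector $\mathbf{y}\in\mathbb{R}^n$ must satisfy $\mathbf{C}\mathbf{y}=\mathbf{0}$ (coherence). Expert $j$ provides base forecasts $\widehat{\mathbf{y}}^j$ of the subvector $\mathbf{L}_j\mathbf{y}$; these are stacked "by expert" into $\widehat{\mathbf{y}}$, and $\mathbf{W}$ plays the role of the covariance matrix of the base forecast errors $\widehat{\mathbf{y}}-\mathbf{K}\mathbf{y}$. $\widetilde{\mathbf{y}}^c$ is called the optimal (minimum mean square error) linear coherent combined forecast. *)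

theory Defs
  imports "Jordan_Normal_Form.Matrix"
begin

definition mat_inv :: "real mat \<Rightarrow> real mat" where
  "mat_inv A = (SOME B. inverts_mat A B \<and> inverts_mat B A)"

definition selection_mat :: "real mat \<Rightarrow> nat \<Rightarrow> nat \<Rightarrow> bool" where
  "selection_mat L nj n \<longleftrightarrow> L \<in> carrier_mat nj n \<and>
     (\<forall>r<nj. \<exists>i<n. row L r = unit_vec n i) \<and>
     (\<forall>r<nj. \<forall>r'<nj. r \<noteq> r' \<longrightarrow> row L r \<noteq> row L r')"

definition stack_rows :: "nat \<Rightarrow> real mat list \<Rightarrow> real mat" where
  "stack_rows n Ls = foldr (\<lambda>A B. A @\<^sub>r B) Ls (0\<^sub>m 0 n)"

(* C = [I_nu  -A], with A of size nu x nb *)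
definition coherence_mat :: "nat \<Rightarrow> nat \<Rightarrow> real mat \<Rightarrow> real mat" where
  "coherence_mat nu nb A = mat nu (nu + nb)
     (\<lambda>(i,k). if k < nu then (if i = k then 1 else 0) else - A $$ (i, k - nu))"

definition sym_pos_def :: "real mat \<Rightarrow> nat \<Rightarrow> bool" where
  "sym_pos_def W m \<longleftrightarrow> W \<in> carrier_mat m m \<and> transpose_mat W = W \<and>
     (\<forall>x\<in>carrier_vec m. x \<noteq> 0\<^sub>v m \<longrightarrow> x \<bullet> (W *\<^sub>v x) > 0)"

definition gls_obj :: "real mat \<Rightarrow> real mat \<Rightarrow> real vec \<Rightarrow> real vec \<Rightarrow> real" where
  "gls_obj W K yhat y = (yhat - K *\<^sub>v y) \<bullet> (mat_inv W *\<^sub>v (yhat - K *\<^sub>v y))"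

end

theory Submission imports Defs "Jordan_Normal_Form.Determinant" begin

lemma assoc': "dim_col A = dim_row B \<Longrightarrow> dim_col B = dim_row C \<Longrightarrow> (A::'a::semiring_0 mat)*B*C = A*(B*C)"
  by (rule assoc_mult_mat[of A "dim_row A" "dim_col A" B "dim_col B" C "dim_col C"]) (intro carrier_matI; simp)+

lemma assocv': "dim_col A = dim_row B \<Longrightarrow> dim_col B = dim_vec v \<Longrightarrow> ((A::'a::semiring_0 mat)*B) *\<^sub>v v = A *\<^sub>v (B *\<^sub>v v)"
  by (rule assoc_mult_mat_vec[of A "dim_row A" "dim_col A" B "dim_col B" v]) ((intro carrier_matI carrier_vecI; simp)+)

lemma cmv[simp]: "dim_row A = n \<Longrightarrow> A *\<^sub>v v \<in> carrier_vec n"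
  by (intro carrier_vecI) simp

lemma cmm[simp]: "dim_row A = a \<Longrightarrow> dim_col B = b \<Longrightarrow> A * B \<in> carrier_mat a b"
  by (intro carrier_matI) simp_all

lemma pd_inv:
  fixes A :: "real mat"
  assumes A: "A \<in> carrier_mat n n" and pd: "\<forall>x\<in>carrier_vec n. x \<noteq> 0\<^sub>v n \<longrightarrow> x \<bullet> (A *\<^sub>v x) > 0"
  shows "invertible_mat A \<and> mat_inv A \<in> carrier_mat n n \<and> A * mat_inv A = 1\<^sub>m n \<and> mat_inv A * A = 1\<^sub>m n"
proof -
  have "det A \<noteq> 0"
  proof
    assume "det A = 0"
    then obtain v where v: "v \<in> carrier_vec n" "v \<noteq> 0\<^sub>v n" "A *\<^sub>v v = 0\<^sub>v n"
      using det_0_iff_vec_prod_zero[OF A] by auto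
    with pd show False by fastforce
  qed
  from det_non_zero_imp_unit[OF A this, of "()"]
  obtain B where B: "B \<in> carrier_mat n n" "B * A = 1\<^sub>m n" "A * B = 1\<^sub>m n"
    by (auto simp: Units_def ring_mat_simps)
  have ex: "\<exists>B. inverts_mat A B \<and> inverts_mat B A" using A B unfolding inverts_mat_def by auto
  hence inv: "inverts_mat A (mat_inv A) \<and> inverts_mat (mat_inv A) A" unfolding mat_inv_def by (rule someI_ex)
  from inv A have 1: "A * mat_inv A = 1\<^sub>m n" and 2: "mat_inv A * A = 1\<^sub>m (dim_row (mat_inv A))"
    by (auto simp: inverts_mat_def)
  have c: "dim_col (mat_inv A) = n" using arg_cong[OF 1, of dim_col] by simp
  have r: "dim_row (mat_inv A) = n" using arg_cong[OF 2, of dim_col] A by simp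
  show ?thesis using 1 2 c r A ex unfolding invertible_mat_def square_mat.simps carrier_mat_def by auto
qed

lemma spd_inv:
  fixes A :: "real mat"
  assumes A: "A \<in> carrier_mat n n" and sym: "transpose_mat A = A"
    and pd: "\<forall>x\<in>carrier_vec n. x \<noteq> 0\<^sub>v n \<longrightarrow> x \<bullet> (A *\<^sub>v x) > 0"
  shows "invertible_mat A \<and> mat_inv A \<in> carrier_mat n n \<and> A * mat_inv A = 1\<^sub>m n \<and> mat_inv A * A = 1\<^sub>m n
    \<and> transpose_mat (mat_inv A) = mat_inv A
    \<and> (\<forall>x\<in>carrier_vec n. x \<noteq> 0\<^sub>v n \<longrightarrow> x \<bullet> (mat_inv A *\<^sub>v x) > 0)"
proof -
  note P = pd_inv[OF A pd]
  define B where "B = mat_inv A"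
  have B: "B \<in> carrier_mat n n" "A * B = 1\<^sub>m n" "B * A = 1\<^sub>m n" using P B_def by auto
  have "A * transpose_mat B = transpose_mat (B * A)"
    using transpose_mult[OF B(1) A] sym by simp
  also have "\<dots> = 1\<^sub>m n" using B by simp
  finally have AB: "A * transpose_mat B = 1\<^sub>m n" .
  have "transpose_mat B = (B * A) * transpose_mat B" using B by simp
  also have "\<dots> = B * (A * transpose_mat B)" using B A by (intro assoc_mult_mat[of _ n n _ n _ n]) auto
  also have "\<dots> = B" using AB B by simp
  finally have symB: "transpose_mat B = B" .
  have pdB: "x \<bullet> (B *\<^sub>v x) > 0" if x: "x \<in> carrier_vec n" "x \<noteq> 0\<^sub>v n" for x
  proof -
    define y where "y = B *\<^sub>v x"
    have y: "y \<in> carrier_vec n" using B x y_def by simp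
    have Ay: "A *\<^sub>v y = x" unfolding y_def
      using assoc_mult_mat_vec[OF A B(1) x(1)] B x by simp
    have "y \<noteq> 0\<^sub>v n" using Ay x A by auto
    hence "y \<bullet> (A *\<^sub>v y) > 0" using pd y by auto
    also have "y \<bullet> (A *\<^sub>v y) = (transpose_mat A *\<^sub>v y) \<bullet> y"
      using transpose_vec_mult_scalar[OF A y y] by simp
    also have "\<dots> = x \<bullet> (B *\<^sub>v x)" using sym Ay y_def by simp
    finally show ?thesis .
  qed
  show ?thesis using P symB pdB B_def by auto
qed

lemma stack_props:
  assumes "length ns = length Ls" "\<forall>j<length Ls. Ls!j \<in> carrier_mat (ns!j) n"
  shows "stack_rows n Ls \<in> carrier_mat (sum_list ns) n \<and>
    (\<forall>y\<in>carrier_vec n. stack_rows n Ls *\<^sub>v y = 0\<^sub>v (sum_list ns) \<longrightarrow> (\<forall>j<length Ls. Ls!j *\<^sub>v y = 0\<^sub>v (ns!j)))"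
  using assms
proof (induction Ls arbitrary: ns)
  case Nil
  then show ?case by (simp add: stack_rows_def)
next
  case (Cons L Ls)
  then obtain k ks where ns: "ns = k # ks" by (cases ns) auto
  have L: "L \<in> carrier_mat k n" using Cons.prems ns by force
  have pr: "length ks = length Ls" "\<forall>j<length Ls. Ls!j \<in> carrier_mat (ks!j) n"
    using Cons.prems ns by auto
  note IH = Cons.IH[OF pr]
  have eq: "stack_rows n (L # Ls) = L @\<^sub>r stack_rows n Ls" by (simp add: stack_rows_def)
  have car: "stack_rows n (L # Ls) \<in> carrier_mat (sum_list ns) n" using eq IH L ns by auto
  have "\<forall>j<length (L#Ls). (L#Ls)!j *\<^sub>v y = 0\<^sub>v (ns!j)"
    if y: "y \<in> carrier_vec n" and z: "stack_rows n (L # Ls) *\<^sub>v y = 0\<^sub>v (sum_list ns)" for y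
  proof -
    have "(L *\<^sub>v y) @\<^sub>v (stack_rows n Ls *\<^sub>v y) = 0\<^sub>v k @\<^sub>v 0\<^sub>v (sum_list ks)"
      using z eq mat_mult_append[OF L _ y, of "stack_rows n Ls" "sum_list ks"] IH ns by auto
    hence "L *\<^sub>v y = 0\<^sub>v k \<and> stack_rows n Ls *\<^sub>v y = 0\<^sub>v (sum_list ks)"
      using L y append_vec_eq[of "L *\<^sub>v y" k "0\<^sub>v k"] by auto
    thus ?thesis using IH y ns by (auto simp: nth_Cons split: nat.split)
  qed
  then show ?case using car by blast
qed

lemma coh_carrier: "coherence_mat nu nb A \<in> carrier_mat nu (nu+nb)"
  by (simp add: coherence_mat_def)

lemma coh_inj:
  assumes z: "z \<in> carrier_vec nu" and e: "transpose_mat (coherence_mat nu nb A) *\<^sub>v z = 0\<^sub>v (nu+nb)"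
  shows "z = 0\<^sub>v nu"
proof (rule eq_vecI)
  fix k assume "k < dim_vec (0\<^sub>v nu :: real vec)"
  hence k: "k < nu" by simp
  have c: "col (coherence_mat nu nb A) k = unit_vec nu k"
    using k by (intro eq_vecI) (auto simp: coherence_mat_def unit_vec_def)
  have "(transpose_mat (coherence_mat nu nb A) *\<^sub>v z) $ k = col (coherence_mat nu nb A) k \<bullet> z"
    using k by (simp add: coherence_mat_def)
  also have "\<dots> = z $ k" using c z k by simp
  finally show "z $ k = 0\<^sub>v nu $ k" using e k by simp
qed (use z in auto)

lemma core:
  fixes K Wi Wc C Si :: "real mat" and yhat :: "real vec"
  assumes K: "K \<in> carrier_mat m n" and Wi: "Wi \<in> carrier_mat m m" and Wis: "transpose_mat Wi = Wi"
    and Wc: "Wc \<in> carrier_mat n n" and Wcs: "transpose_mat Wc = Wc"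
    and QWc: "transpose_mat K * Wi * K * Wc = 1\<^sub>m n"
    and C: "C \<in> carrier_mat nu n" and Si: "Si \<in> carrier_mat nu nu"
    and SSi: "C * Wc * transpose_mat C * Si = 1\<^sub>m nu"
    and yh: "yhat \<in> carrier_vec m"
  defines "M \<equiv> 1\<^sub>m n - Wc * transpose_mat C * Si * C"
    and "\<Omega> \<equiv> Wi * K * Wc"
    and "yc \<equiv> ((1\<^sub>m n - Wc * transpose_mat C * Si * C) * transpose_mat (Wi * K * Wc)) *\<^sub>v yhat"
  shows "M * transpose_mat \<Omega> \<in> carrier_mat n m \<and> yc = M *\<^sub>v (transpose_mat \<Omega> *\<^sub>v yhat)
    \<and> yc \<in> carrier_vec n \<and> C *\<^sub>v yc = 0\<^sub>v nu \<and>
    (\<forall>y\<in>carrier_vec n. C *\<^sub>v y = 0\<^sub>v nu \<longrightarrow>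
      (yhat - K *\<^sub>v y) \<bullet> (Wi *\<^sub>v (yhat - K *\<^sub>v y)) =
      (yhat - K *\<^sub>v yc) \<bullet> (Wi *\<^sub>v (yhat - K *\<^sub>v yc)) + (K *\<^sub>v (y - yc)) \<bullet> (Wi *\<^sub>v (K *\<^sub>v (y - yc))))"
proof -
  have yc_def: "yc = (M * transpose_mat \<Omega>) *\<^sub>v yhat" unfolding yc_def M_def \<Omega>_def ..
  have dims[simp]: "dim_row K = m" "dim_col K = n" "dim_row Wi = m" "dim_col Wi = m"
    "dim_row Wc = n" "dim_col Wc = n" "dim_row C = nu" "dim_col C = n" "dim_row Si = nu" "dim_col Si = nu"
    "dim_vec yhat = m"
    using K Wi Wc C Si yh by auto
  have Ot: "transpose_mat \<Omega> = Wc * transpose_mat K * Wi"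
  proof -
    have "transpose_mat \<Omega> = transpose_mat Wc * transpose_mat (Wi * K)"
      unfolding \<Omega>_def by (rule transpose_mult[of _ m n _ n]) (use Wi K Wc in auto)
    also have "transpose_mat (Wi * K) = transpose_mat K * transpose_mat Wi"
      by (rule transpose_mult[of _ m m _ n]) (use Wi K in auto)
    finally show ?thesis using Wis Wcs by (simp add: assoc')
  qed
  have Mc: "M \<in> carrier_mat n n" unfolding M_def by auto
  have [simp]: "dim_row M = n" "dim_col M = n" using Mc by auto
  have Pc: "M * transpose_mat \<Omega> \<in> carrier_mat n m" using Mc Ot by auto
  define z where "z = transpose_mat \<Omega> *\<^sub>v yhat"
  have zc: "z \<in> carrier_vec n" unfolding z_def Ot by auto
  define lam where "lam = Si *\<^sub>v (C *\<^sub>v z)"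
  have lc: "lam \<in> carrier_vec nu" unfolding lam_def by auto
  define u where "u = transpose_mat C *\<^sub>v lam"
  have uc: "u \<in> carrier_vec n" unfolding u_def using lc by auto
  have ycz: "yc = M *\<^sub>v z" unfolding yc_def z_def using Ot by (simp add: assocv')
  have ycu: "yc = z - Wc *\<^sub>v u"
  proof -
    have "yc = 1\<^sub>m n *\<^sub>v z - (Wc * transpose_mat C * Si * C) *\<^sub>v z"
      unfolding ycz M_def by (rule minus_mult_distrib_mat_vec[of _ n n]) (use zc in auto)
    also have "(Wc * transpose_mat C * Si * C) *\<^sub>v z = Wc *\<^sub>v u"
      unfolding u_def lam_def using zc by (simp add: assoc' assocv')
    finally show ?thesis using zc by simp
  qed
  have ycc: "yc \<in> carrier_vec n" using ycu zc uc Wc by auto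
  have Cyc: "C *\<^sub>v yc = 0\<^sub>v nu"
  proof -
    have "C *\<^sub>v yc = C *\<^sub>v z - C *\<^sub>v (Wc *\<^sub>v u)"
      unfolding ycu by (rule mult_minus_distrib_mat_vec[OF C zc]) (use uc Wc in auto)
    also have "C *\<^sub>v (Wc *\<^sub>v u) = (C * Wc * transpose_mat C * Si) *\<^sub>v (C *\<^sub>v z)"
      unfolding u_def lam_def using zc by (simp add: assoc' assocv')
    also have "\<dots> = C *\<^sub>v z" using SSi zc by simp
    finally show ?thesis using zc by simp
  qed
  define r0 where "r0 = yhat - K *\<^sub>v yc"
  have r0c: "r0 \<in> carrier_vec m" unfolding r0_def using ycc yh K by auto
  have key: "transpose_mat K *\<^sub>v (Wi *\<^sub>v r0) = u"
  proof -
    define a where "a = transpose_mat K *\<^sub>v (Wi *\<^sub>v yhat)"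
    have ac: "a \<in> carrier_vec n" unfolding a_def by auto
    have "transpose_mat K *\<^sub>v (Wi *\<^sub>v r0) = transpose_mat K *\<^sub>v (Wi *\<^sub>v yhat - Wi *\<^sub>v (K *\<^sub>v yc))"
      unfolding r0_def by (subst mult_minus_distrib_mat_vec[OF Wi]) (use yh ycc in auto)
    also have "\<dots> = a - transpose_mat K *\<^sub>v (Wi *\<^sub>v (K *\<^sub>v yc))"
      unfolding a_def by (rule mult_minus_distrib_mat_vec[of _ n m]) (use ycc in auto)
    also have "transpose_mat K *\<^sub>v (Wi *\<^sub>v (K *\<^sub>v yc)) = (transpose_mat K * Wi * K) *\<^sub>v yc"
      using ycc by (simp add: assoc' assocv')
    also have "\<dots> = (transpose_mat K * Wi * K) *\<^sub>v z - (transpose_mat K * Wi * K) *\<^sub>v (Wc *\<^sub>v u)"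
      unfolding ycu by (rule mult_minus_distrib_mat_vec[of _ n n]) (use zc uc in auto)
    also have "(transpose_mat K * Wi * K) *\<^sub>v (Wc *\<^sub>v u) = (transpose_mat K * Wi * K * Wc) *\<^sub>v u"
      using uc by (simp add: assoc' assocv')
    also have "\<dots> = u" using QWc uc by simp
    also have "(transpose_mat K * Wi * K) *\<^sub>v z = (transpose_mat K * Wi * K * Wc) *\<^sub>v a"
      unfolding z_def Ot a_def by (simp add: assoc' assocv')
    also have "\<dots> = a" using QWc ac by simp
    finally show ?thesis using ac uc by (intro eq_vecI) auto
  qed
  have main: "(yhat - K *\<^sub>v y) \<bullet> (Wi *\<^sub>v (yhat - K *\<^sub>v y)) =
      (yhat - K *\<^sub>v yc) \<bullet> (Wi *\<^sub>v (yhat - K *\<^sub>v yc)) + (K *\<^sub>v (y - yc)) \<bullet> (Wi *\<^sub>v (K *\<^sub>v (y - yc)))"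
    if y: "y \<in> carrier_vec n" and Cy: "C *\<^sub>v y = 0\<^sub>v nu" for y
  proof -
    define d where "d = y - yc"
    have dc: "d \<in> carrier_vec n" unfolding d_def using y ycc by auto
    define v where "v = K *\<^sub>v d"
    have vc: "v \<in> carrier_vec m" unfolding v_def by auto
    have Cd: "C *\<^sub>v d = 0\<^sub>v nu"
      unfolding d_def by (subst mult_minus_distrib_mat_vec[OF C y ycc]) (use Cy Cyc in auto)
    have vK: "v = K *\<^sub>v y - K *\<^sub>v yc" unfolding v_def d_def by (rule mult_minus_distrib_mat_vec[OF K y ycc])
    have res: "yhat - K *\<^sub>v y = r0 - v"
      unfolding vK r0_def by (intro eq_vecI) (use yh y ycc in auto)
    have c1: "v \<bullet> (Wi *\<^sub>v r0) = 0"
    proof -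
      have "v \<bullet> (Wi *\<^sub>v r0) = (Wi *\<^sub>v r0) \<bullet> v" using vc r0c by (intro comm_scalar_prod[of _ m]) auto
      also have "\<dots> = (transpose_mat K *\<^sub>v (Wi *\<^sub>v r0)) \<bullet> d"
        unfolding v_def by (rule transpose_vec_mult_scalar[OF K dc, symmetric]) (use r0c in auto)
      also have "\<dots> = (transpose_mat C *\<^sub>v lam) \<bullet> d" using key u_def by simp
      also have "\<dots> = lam \<bullet> (C *\<^sub>v d)" by (rule transpose_vec_mult_scalar[OF C dc lc])
      also have "\<dots> = 0" using Cd lc by simp
      finally show ?thesis .
    qed
    have c2: "r0 \<bullet> (Wi *\<^sub>v v) = 0"
    proof -
      have "r0 \<bullet> (Wi *\<^sub>v v) = (transpose_mat Wi *\<^sub>v r0) \<bullet> v"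
        by (rule transpose_vec_mult_scalar[OF Wi vc r0c, symmetric])
      also have "\<dots> = v \<bullet> (Wi *\<^sub>v r0)" using Wis vc r0c by (simp add: comm_scalar_prod[of _ m])
      finally show ?thesis using c1 by simp
    qed
    have "(r0 - v) \<bullet> (Wi *\<^sub>v (r0 - v)) = (r0 - v) \<bullet> (Wi *\<^sub>v r0 - Wi *\<^sub>v v)"
      by (subst mult_minus_distrib_mat_vec[OF Wi r0c vc]) simp
    also have "\<dots> = r0 \<bullet> (Wi *\<^sub>v r0 - Wi *\<^sub>v v) - v \<bullet> (Wi *\<^sub>v r0 - Wi *\<^sub>v v)"
      by (rule minus_scalar_prod_distrib[of _ m]) (use r0c vc in auto)
    also have "\<dots> = (r0 \<bullet> (Wi *\<^sub>v r0) - r0 \<bullet> (Wi *\<^sub>v v)) - (v \<bullet> (Wi *\<^sub>v r0) - v \<bullet> (Wi *\<^sub>v v))"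
      using scalar_prod_minus_distrib[of r0 m "Wi *\<^sub>v r0" "Wi *\<^sub>v v"]
        scalar_prod_minus_distrib[of v m "Wi *\<^sub>v r0" "Wi *\<^sub>v v"] r0c vc by auto
    finally show ?thesis using res c1 c2 unfolding r0_def v_def d_def by simp
  qed
  have ycM: "yc = M *\<^sub>v (transpose_mat \<Omega> *\<^sub>v yhat)" using ycz z_def by simp
  show ?thesis using Pc ycM ycc Cyc main by blast
qed
theorem theorem1:
  fixes nu n :: nat and A :: "real mat" and Ls :: "real mat list" and ns :: "nat list"
    and yhat :: "real vec" and W :: "real mat"
  assumes "0 < nu" and "nu < n"
    and "A \<in> carrier_mat nu (n - nu)"
    and "length Ls \<ge> 2" and "length ns = length Ls"
    and "\<forall>j<length Ls. 1 \<le> ns ! j \<and> ns ! j \<le> n \<and> selection_mat (Ls ! j) (ns ! j) n"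
    and "\<forall>i<n. \<exists>j<length Ls. \<exists>r<ns ! j. row (Ls ! j) r = unit_vec n i"
    and "yhat \<in> carrier_vec (sum_list ns)"
    and "sym_pos_def W (sum_list ns)"
  shows
    "let m = sum_list ns;
         C = coherence_mat nu (n - nu) A;
         K = stack_rows n Ls;
         Wi = mat_inv W;
         Wc = mat_inv (transpose_mat K * Wi * K);
         \<Omega> = Wi * K * Wc;
         M = 1\<^sub>m n - Wc * transpose_mat C * mat_inv (C * Wc * transpose_mat C) * C;
         \<Psi>T = M * transpose_mat \<Omega>;
         yc = \<Psi>T *\<^sub>v yhat
     in invertible_mat (transpose_mat K * Wi * K)
      \<and> invertible_mat (C * Wc * transpose_mat C)
      \<and> \<Psi>T \<in> carrier_mat n m
      \<and> yc = M *\<^sub>v (transpose_mat \<Omega> *\<^sub>v yhat)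
      \<and> yc \<in> carrier_vec n \<and> C *\<^sub>v yc = 0\<^sub>v nu
      \<and> (\<forall>y\<in>carrier_vec n. C *\<^sub>v y = 0\<^sub>v nu \<longrightarrow> gls_obj W K yhat yc \<le> gls_obj W K yhat y)
      \<and> (\<forall>y\<in>carrier_vec n. C *\<^sub>v y = 0\<^sub>v nu \<and> gls_obj W K yhat y \<le> gls_obj W K yhat yc
            \<longrightarrow> y = yc)"
proof -
  define m where "m = sum_list ns"
  define C where "C = coherence_mat nu (n - nu) A"
  define K where "K = stack_rows n Ls"
  define Wi where "Wi = mat_inv W"
  define Q where "Q = transpose_mat K * Wi * K"
  define Wc where "Wc = mat_inv Q"
  define S where "S = C * Wc * transpose_mat C"
  define Si where "Si = mat_inv S"
  have Lc: "\<forall>j<length Ls. Ls!j \<in> carrier_mat (ns!j) n"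
    using assms(6) unfolding selection_mat_def by auto
  note SP = stack_props[OF assms(5) Lc, folded K_def m_def]
  have Kc: "K \<in> carrier_mat m n" using SP by auto
  have Kinj: "y = 0\<^sub>v n" if y: "y \<in> carrier_vec n" and Ky: "K *\<^sub>v y = 0\<^sub>v m" for y
  proof (rule eq_vecI)
    fix i assume "i < dim_vec (0\<^sub>v n :: real vec)"
    hence i: "i < n" by simp
    then obtain j r where j: "j < length Ls" and r: "r < ns!j" and row: "row (Ls!j) r = unit_vec n i"
      using assms(7) by blast
    have "Ls!j *\<^sub>v y = 0\<^sub>v (ns!j)" using SP y Ky j by auto
    hence "(Ls!j *\<^sub>v y) $ r = 0" using r by simp
    moreover have "(Ls!j *\<^sub>v y) $ r = y $ i"
    proof -
      have Lj: "Ls!j \<in> carrier_mat (ns!j) n" using Lc j by auto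
      have "(Ls!j *\<^sub>v y) $ r = row (Ls!j) r \<bullet> y" using Lj r by (intro index_mult_mat_vec) auto
      also have "\<dots> = y $ i" using row y i by (simp add: scalar_prod_left_unit)
      finally show ?thesis .
    qed
    ultimately show "y $ i = 0\<^sub>v n $ i" using i by simp
  qed (use y in auto)
  have Wsp: "W \<in> carrier_mat m m" "transpose_mat W = W"
    "\<forall>x\<in>carrier_vec m. x \<noteq> 0\<^sub>v m \<longrightarrow> x \<bullet> (W *\<^sub>v x) > 0"
    using assms(9) unfolding sym_pos_def_def m_def by auto
  note WI = spd_inv[OF Wsp]
  have Wic: "Wi \<in> carrier_mat m m" and Wis: "transpose_mat Wi = Wi"
    and Wipd: "\<forall>x\<in>carrier_vec m. x \<noteq> 0\<^sub>v m \<longrightarrow> x \<bullet> (Wi *\<^sub>v x) > 0"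
    using WI unfolding Wi_def by auto
  have Wipd': "x \<bullet> (Wi *\<^sub>v x) \<ge> 0" if "x \<in> carrier_vec m" for x
  proof (cases "x = 0\<^sub>v m")
    case True
    have "Wi *\<^sub>v x \<in> carrier_vec m" using Wic by simp
    then show ?thesis using True by simp
  next
    case False
    then show ?thesis using Wipd that by (auto intro: order.strict_implies_order)
  qed
  have Qc: "Q \<in> carrier_mat n n" unfolding Q_def using Kc Wic by auto
  have Qs: "transpose_mat Q = Q"
  proof -
    have "transpose_mat Q = transpose_mat K * transpose_mat (transpose_mat K * Wi)"
      unfolding Q_def by (rule transpose_mult[of _ n m _ n]) (use Kc Wic in auto)
    also have "transpose_mat (transpose_mat K * Wi) = transpose_mat Wi * K"
      by (subst transpose_mult[of _ n m _ m]) (use Kc Wic in auto)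
    finally show ?thesis unfolding Q_def using Wis Kc Wic by (simp add: assoc_mult_mat[of _ n m _ m _ n])
  qed
  have Qpd: "\<forall>x\<in>carrier_vec n. x \<noteq> 0\<^sub>v n \<longrightarrow> x \<bullet> (Q *\<^sub>v x) > 0"
  proof (intro ballI impI)
    fix x :: "real vec" assume x: "x \<in> carrier_vec n" and nz: "x \<noteq> 0\<^sub>v n"
    have Kx: "K *\<^sub>v x \<in> carrier_vec m" using Kc x by auto
    have "K *\<^sub>v x \<noteq> 0\<^sub>v m" using Kinj x nz by auto
    hence "(K *\<^sub>v x) \<bullet> (Wi *\<^sub>v (K *\<^sub>v x)) > 0" using Wipd Kx by auto
    also have "(K *\<^sub>v x) \<bullet> (Wi *\<^sub>v (K *\<^sub>v x)) = (Wi *\<^sub>v (K *\<^sub>v x)) \<bullet> (K *\<^sub>v x)"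
      by (rule comm_scalar_prod[of _ m]) (use Kx Wic in auto)
    also have "\<dots> = (transpose_mat K *\<^sub>v (Wi *\<^sub>v (K *\<^sub>v x))) \<bullet> x"
      by (rule transpose_vec_mult_scalar[OF Kc x, symmetric]) (use Wic Kx in auto)
    also have "\<dots> = x \<bullet> (Q *\<^sub>v x)"
      using Kc Wic x unfolding Q_def by (subst comm_scalar_prod[of _ n]) (auto simp: assocv' assoc')
    finally show "x \<bullet> (Q *\<^sub>v x) > 0" .
  qed
  note QI = spd_inv[OF Qc Qs Qpd]
  have Wcc: "Wc \<in> carrier_mat n n" and Wcs: "transpose_mat Wc = Wc" and QWc: "Q * Wc = 1\<^sub>m n"
    and Wcpd: "\<forall>x\<in>carrier_vec n. x \<noteq> 0\<^sub>v n \<longrightarrow> x \<bullet> (Wc *\<^sub>v x) > 0"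
    using QI unfolding Wc_def by auto
  have nn: "nu + (n - nu) = n" using assms(2) by simp
  have Cc: "C \<in> carrier_mat nu n" unfolding C_def using coh_carrier[of nu "n - nu" A] nn by simp
  have Sc: "S \<in> carrier_mat nu nu" unfolding S_def using Cc Wcc by auto
  have Spd: "\<forall>x\<in>carrier_vec nu. x \<noteq> 0\<^sub>v nu \<longrightarrow> x \<bullet> (S *\<^sub>v x) > 0"
  proof (intro ballI impI)
    fix x :: "real vec" assume x: "x \<in> carrier_vec nu" and nz: "x \<noteq> 0\<^sub>v nu"
    have Cx: "transpose_mat C *\<^sub>v x \<in> carrier_vec n" using Cc x by auto
    have "transpose_mat C *\<^sub>v x \<noteq> 0\<^sub>v n"
      using coh_inj[of x nu "n - nu" A] x nz nn unfolding C_def by auto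
    hence "(transpose_mat C *\<^sub>v x) \<bullet> (Wc *\<^sub>v (transpose_mat C *\<^sub>v x)) > 0" using Wcpd Cx by auto
    also have "\<dots> = x \<bullet> (C *\<^sub>v (Wc *\<^sub>v (transpose_mat C *\<^sub>v x)))"
      by (rule transpose_vec_mult_scalar[OF Cc _ x]) (use Wcc Cx in auto)
    also have "\<dots> = x \<bullet> (S *\<^sub>v x)"
      using Cc Wcc x unfolding S_def by (auto simp: assocv' assoc')
    finally show "x \<bullet> (S *\<^sub>v x) > 0" .
  qed
  note SI = pd_inv[OF Sc Spd]
  have Sic: "Si \<in> carrier_mat nu nu" and SSi: "S * Si = 1\<^sub>m nu" using SI unfolding Si_def by auto
  note CO = core[OF Kc Wic Wis Wcc Wcs QWc[unfolded Q_def] Cc Sic SSi[unfolded S_def] assms(8)[folded m_def]]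
  define yc where "yc = ((1\<^sub>m n - Wc * transpose_mat C * Si * C) * transpose_mat (Wi * K * Wc)) *\<^sub>v yhat"
  have f: "gls_obj W K yhat y = gls_obj W K yhat yc + (K *\<^sub>v (y - yc)) \<bullet> (Wi *\<^sub>v (K *\<^sub>v (y - yc)))"
    if "y \<in> carrier_vec n" "C *\<^sub>v y = 0\<^sub>v nu" for y
    using CO that unfolding gls_obj_def yc_def Wi_def by auto
  have ycc: "yc \<in> carrier_vec n" using CO yc_def by auto
  have opt: "gls_obj W K yhat yc \<le> gls_obj W K yhat y" if "y \<in> carrier_vec n" "C *\<^sub>v y = 0\<^sub>v nu" for y
    using f[OF that] Wipd'[of "K *\<^sub>v (y - yc)"] Kc that ycc by auto
  have uniq: "y = yc" if y: "y \<in> carrier_vec n" "C *\<^sub>v y = 0\<^sub>v nu" and le: "gls_obj W K yhat y \<le> gls_obj W K yhat yc" for y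
  proof -
    have dc: "y - yc \<in> carrier_vec n" using y ycc by auto
    have "(K *\<^sub>v (y - yc)) \<bullet> (Wi *\<^sub>v (K *\<^sub>v (y - yc))) \<le> 0" using f[OF y] le by simp
    hence "K *\<^sub>v (y - yc) = 0\<^sub>v m" using Wipd Kc dc by (meson leD mult_mat_vec_carrier)
    hence "y - yc = 0\<^sub>v n" using Kinj dc by auto
    hence "\<forall>i<n. (y - yc) $ i = 0" by simp
    thus ?thesis using y ycc by (intro eq_vecI) auto
  qed
  show ?thesis
    unfolding Let_def m_def[symmetric] C_def[symmetric] K_def[symmetric] Wi_def[symmetric] Q_def[symmetric]
      Wc_def[symmetric] S_def[symmetric] Si_def[symmetric] yc_def[symmetric]
    apply (intro conjI)
    subgoal using QI by blast
    subgoal using SI by blast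
    subgoal using CO by blast
    subgoal using CO unfolding yc_def by blast
    subgoal using ycc by blast
    subgoal using CO unfolding yc_def by blast
    subgoal using opt by blast
    subgoal using uniq by blast
    done
qed

end
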